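(* Let $n\ge2$, $m,m'\in\mathbb{Z}$ with $\gcd(n,m)=1$ and $\gcd(n,m+m')=1$. Then, as rational functions of $s$, $$(1-s)\,\zeta(s,\sigma_{n,m+m'};\beta_{n,q})=(1-q^{m'}s)\,\zeta(q^{m'}s,\sigma_{n,m};\beta_{n,q}).$$
   Context: $\sigma_{n,m}:=(\sigma_1\cdots\sigma_{n-1})^m\in\mathrm{B}_n$ (braid group with standard generators $\sigma_i$). The Burau representation $\beta_{n,q}$ is given by $\beta_{n,q}(\sigma_i)=I_{i-1}\oplus\begin{pmatrix}1-q&1\\ q&0\end{pmatrix}\oplus I_{n-i-1}$ over $\mathbb{Z}[q^{\pm1}]$, and $\zeta(s,\sigma;\beta_{n,q}):=\det(I_n-\beta_{n,q}(\sigma)s)^{-1}$. *)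

theory Defs
  imports "Jordan_Normal_Form.Determinant" "HOL-Computational_Algebra.Polynomial_Factorial"
begin

text \<open>Coefficient field: Q(q) = fraction field of Z[q], which contains Z[q, q^-1].
  The formal variable q is the class of the polynomial X.\<close>
type_synonym coeff = "int poly fract"

definition burau_q :: coeff where
  "burau_q = to_fract [:0, 1:]"

text \<open>Burau matrix of the standard generator sigma_i (1 \<le> i \<le> n-1), rows/columns 0-indexed:
  the 2x2 block [[1-q,1],[q,0]] sits at rows/cols i-1, i.\<close>
definition burau_gen :: "nat \<Rightarrow> 'a::field \<Rightarrow> nat \<Rightarrow> 'a mat" where
  "burau_gen n q i = mat n n (\<lambda>(r, c).
     if r = i - 1 \<and> c = i - 1 then 1 - q
     else if r = i - 1 \<and> c = i then 1
     else if r = i \<and> c = i - 1 then q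
     else if r = i \<and> c = i then 0
     else if r = c then 1 else 0)"

definition burau_gen_inv :: "nat \<Rightarrow> 'a::field \<Rightarrow> nat \<Rightarrow> 'a mat" where
  "burau_gen_inv n q i = mat n n (\<lambda>(r, c).
     if r = i - 1 \<and> c = i - 1 then 0
     else if r = i - 1 \<and> c = i then inverse q
     else if r = i \<and> c = i - 1 then 1
     else if r = i \<and> c = i then 1 - inverse q
     else if r = c then 1 else 0)"

text \<open>beta(sigma_1 ... sigma_{n-1}) and beta((sigma_1 ... sigma_{n-1})^{-1})
  = beta(sigma_{n-1}^{-1} ... sigma_1^{-1}).\<close>
definition burau_delta :: "nat \<Rightarrow> 'a::field \<Rightarrow> 'a mat" where
  "burau_delta n q = foldr (\<lambda>i A. burau_gen n q i * A) [1..<n] (1\<^sub>m n)"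

definition burau_delta_inv :: "nat \<Rightarrow> 'a::field \<Rightarrow> 'a mat" where
  "burau_delta_inv n q = foldr (\<lambda>i A. burau_gen_inv n q i * A) (rev [1..<n]) (1\<^sub>m n)"

text \<open>beta_{n,q}(sigma_{n,m}) for m an integer, sigma_{n,m} = (sigma_1 ... sigma_{n-1})^m.\<close>
definition burau_sigma :: "nat \<Rightarrow> int \<Rightarrow> 'a::field \<Rightarrow> 'a mat" where
  "burau_sigma n m q =
     (if 0 \<le> m then burau_delta n q ^\<^sub>m nat m else burau_delta_inv n q ^\<^sub>m nat (- m))"

text \<open>zeta(c s, sigma_{n,m}; beta_{n,q}) = det(I_n - beta(sigma_{n,m}) (c s))^{-1},
  as an element of the field of rational functions in s over the coefficient field
  (s is the polynomial variable). With c = 1 this is zeta(s, sigma_{n,m}; beta_{n,q}).\<close>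
definition burau_zeta :: "nat \<Rightarrow> int \<Rightarrow> 'a::field \<Rightarrow> 'a \<Rightarrow> 'a poly fract" where
  "burau_zeta n m q c =
     inverse (to_fract (det (1\<^sub>m n - map_mat (\<lambda>x. [:0, c * x:]) (burau_sigma n m q))))"

end

theory Submission
  imports Defs "HOL-Combinatorics.Permutations" "HOL-Number_Theory.Cong"
begin


lemma det_perm_both:
  fixes A :: "'a::comm_ring_1 mat"
  assumes A: "A \<in> carrier_mat n n" and p: "p permutes {0..<n}"
  shows "det (mat n n (\<lambda>(i,j). A $$ (p i, p j))) = det A"
proof -
  let ?Y = "mat n n (\<lambda>(i,j). A $$ (p i, j))"
  let ?Z = "mat n n (\<lambda>(i,j). A $$ (p i, p j))"
  have Y: "det ?Y = of_int (sign p) * det A" using det_permute_rows[OF A p] by simp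
  have pn: "\<And>i. i < n \<Longrightarrow> p i < n" using p permutes_in_image by fastforce
  have "transpose_mat ?Z = mat n n (\<lambda>(i,j). transpose_mat ?Y $$ (p i, j))"
    by (rule eq_matI, auto simp: pn)
  hence "det ?Z = det (mat n n (\<lambda>(i,j). transpose_mat ?Y $$ (p i, j)))"
    using det_transpose[of ?Z n] by simp
  also have "\<dots> = of_int (sign p) * det (transpose_mat ?Y)"
    using det_permute_rows[of "transpose_mat ?Y" n p] p by simp
  also have "\<dots> = of_int (sign p) * det ?Y" using det_transpose[of ?Y n] by simp
  also have "\<dots> = (of_int (sign p) * of_int (sign p)) * det A" using Y by (simp add: mult.assoc)
  also have "of_int (sign p) * of_int (sign p) = (1::'a)"
    by (metis of_int_mult sign_idempotent of_int_1)
  finally show ?thesis by simp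
qed

lemma mult_entry:
  assumes "A \<in> carrier_mat n n" "B \<in> carrier_mat n n" "i < n" "j < n"
  shows "(A * B) $$ (i,j) = (\<Sum>t<n. A $$ (i,t) * B $$ (t,j))"
  using assms by (simp add: scalar_prod_def lessThan_atLeast0)

lemma det_rank_one:
  fixes M :: "'a::comm_ring_1 mat"
  assumes M: "M \<in> carrier_mat n n" and n: "n > 0"
    and cs: "\<And>j. j < n \<Longrightarrow> (\<Sum>i<n. M $$ (i,j)) = g"
  shows "g * det (mat n n (\<lambda>(i,j). M $$ (i,j) - v i)) = (g - (\<Sum>i<n. v i)) * det M"
proof -
  let ?N = "mat n n (\<lambda>(i,j). M $$ (i,j) - v i)"
  let ?d = "\<Sum>i<n. v i"
  define E :: "'a mat" where "E = mat n n (\<lambda>(i,j). if i = 0 \<or> i = j then 1 else 0)"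
  define X :: "'a mat" where "X = mat n n (\<lambda>(i,j). if i = 0 then 1 else M $$ (i,j))"
  define L :: "'a mat" where "L = mat n n (\<lambda>(i,j). if i = 0 then (if j = 0 then g - ?d else 0)
       else if j = 0 then - v i else if i = j then 1 else 0)"
  define L' :: "'a mat" where "L' = mat n n (\<lambda>(i,j). if i = 0 then (if j = 0 then g else 0)
       else if i = j then 1 else 0)"
  have carr: "E \<in> carrier_mat n n" "X \<in> carrier_mat n n" "L \<in> carrier_mat n n"
     "L' \<in> carrier_mat n n" "?N \<in> carrier_mat n n"
    unfolding E_def X_def L_def L'_def by auto
  have detE: "det E = 1"
  proof -
    have "det E = prod_list (diag_mat E)"
      by (rule det_upper_triangular[OF _ carr(1)], auto simp: upper_triangular_def E_def)
    also have "\<dots> = 1"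
    proof -
      have "map (\<lambda>x. E $$ (x,x)) [0..<n] = map (\<lambda>_. 1) [0..<n]" by (rule map_cong) (auto simp: E_def)
      thus ?thesis unfolding diag_mat_def using carr(1) by (simp add: map_replicate_const)
    qed
    finally show ?thesis .
  qed
  have diagL: "prod_list (diag_mat L) = g - ?d"
  proof -
    have "diag_mat L = (g - ?d) # map (\<lambda>i. 1) [1..<n]"
      unfolding diag_mat_def L_def using n by (simp add: upt_conv_Cons map_Suc_upt[symmetric] del: upt_Suc)
    thus ?thesis by (simp add: map_replicate_const)
  qed
  have diagL': "prod_list (diag_mat L') = g"
  proof -
    have "diag_mat L' = g # map (\<lambda>i. 1) [1..<n]"
      unfolding diag_mat_def L'_def using n by (simp add: upt_conv_Cons map_Suc_upt[symmetric] del: upt_Suc)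
    thus ?thesis by (simp add: map_replicate_const)
  qed
  have detL: "det L = g - ?d"
    using det_lower_triangular[of n L] carr diagL unfolding L_def by fastforce
  have detL': "det L' = g"
    using det_lower_triangular[of n L'] carr diagL' unfolding L'_def by fastforce
  have sumN: "\<And>j. j < n \<Longrightarrow> (\<Sum>t<n. M $$ (t,j) - v t) = g - ?d"
    using cs by (simp add: sum_subtractf)
  have e1: "E * ?N = L * X"
  proof (rule eq_matI)
    fix i j assume ij: "i < dim_row (L * X)" "j < dim_col (L * X)"
    hence i: "i < n" and j: "j < n" using carr by auto
    have LX: "(L * X) $$ (i,j) = (\<Sum>t<n. L $$ (i,t) * X $$ (t,j))"
      using mult_entry[OF carr(3) carr(2) i j] .
    have EN: "(E * ?N) $$ (i,j) = (\<Sum>t<n. E $$ (i,t) * ?N $$ (t,j))"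
      using mult_entry[OF carr(1) carr(5) i j] .
    show "(E * ?N) $$ (i,j) = (L * X) $$ (i,j)"
    proof (cases "i = 0")
      case True
      have "(E * ?N) $$ (i,j) = (\<Sum>t<n. M $$ (t,j) - v t)"
        unfolding EN by (rule sum.cong, auto simp: E_def True j)
      also have "\<dots> = g - ?d" using sumN j .
      also have "\<dots> = (\<Sum>t<n. if t = 0 then g - ?d else 0)" using n by simp
      also have "\<dots> = (L * X) $$ (i,j)"
        unfolding LX by (rule sum.cong, auto simp: L_def X_def True j)
      finally show ?thesis .
    next
      case False
      have "(E * ?N) $$ (i,j) = (\<Sum>t<n. if t = i then M $$ (i,j) - v i else 0)"
        unfolding EN by (rule sum.cong, auto simp: E_def False i j)
      also have "\<dots> = M $$ (i,j) - v i" using i by simp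
      finally have 1: "(E * ?N) $$ (i,j) = M $$ (i,j) - v i" .
      have "(L * X) $$ (i,j) = (\<Sum>t<n. (if t = 0 then - v i else 0) + (if t = i then M $$ (i,j) else 0))"
        unfolding LX by (rule sum.cong, auto simp: L_def X_def False i j)
      also have "\<dots> = - v i + M $$ (i,j)" using i n by (simp add: sum.distrib)
      finally show ?thesis using 1 by simp
    qed
  qed (use carr in auto)
  have e2: "E * M = L' * X"
  proof (rule eq_matI)
    fix i j assume ij: "i < dim_row (L' * X)" "j < dim_col (L' * X)"
    hence i: "i < n" and j: "j < n" using carr by auto
    have LX: "(L' * X) $$ (i,j) = (\<Sum>t<n. L' $$ (i,t) * X $$ (t,j))"
      using mult_entry[OF carr(4) carr(2) i j] .
    have EN: "(E * M) $$ (i,j) = (\<Sum>t<n. E $$ (i,t) * M $$ (t,j))"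
      using mult_entry[OF carr(1) M i j] .
    show "(E * M) $$ (i,j) = (L' * X) $$ (i,j)"
    proof (cases "i = 0")
      case True
      have "(E * M) $$ (i,j) = (\<Sum>t<n. M $$ (t,j))"
        unfolding EN by (rule sum.cong, auto simp: E_def True j)
      also have "\<dots> = g" using cs j .
      also have "\<dots> = (\<Sum>t<n. if t = 0 then g else 0)" using n by simp
      also have "\<dots> = (L' * X) $$ (i,j)"
        unfolding LX by (rule sum.cong, auto simp: L'_def X_def True j)
      finally show ?thesis .
    next
      case False
      have "(E * M) $$ (i,j) = (\<Sum>t<n. if t = i then M $$ (i,j) else 0)"
        unfolding EN by (rule sum.cong, auto simp: E_def False i j)
      also have "\<dots> = (L' * X) $$ (i,j)"
        unfolding LX by (rule sum.cong, auto simp: L'_def X_def False i j)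
      finally show ?thesis .
    qed
  qed (use carr M in auto)
  have "det ?N = (g - ?d) * det X" using det_mult[OF carr(1) carr(5)] det_mult[OF carr(3) carr(2)] e1 detE detL by simp
  moreover have "det M = g * det X" using det_mult[OF carr(1) M] det_mult[OF carr(4) carr(2)] e2 detE detL' by simp
  ultimately show ?thesis by (simp add: ac_simps)
qed


definition shI :: "nat \<Rightarrow> int \<Rightarrow> nat \<Rightarrow> nat \<Rightarrow> bool" where
  "shI n k i j \<longleftrightarrow> int i = (int j + k) mod int n"

lemma shI_row_iff: "n > 0 \<Longrightarrow> shI n k i j \<longleftrightarrow> i = nat ((int j + k) mod int n)"
  unfolding shI_def by auto

lemma shI_col_iff: assumes "n > 0" "i < n" "t < n"
  shows "shI n k i t \<longleftrightarrow> t = nat ((int i - k) mod int n)"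
proof
  assume "shI n k i t"
  hence h: "int i = (int t + k) mod int n" unfolding shI_def .
  hence "(int i - k) mod int n = ((int t + k) - k) mod int n" by (metis mod_diff_left_eq)
  also have "\<dots> = int t" using assms by simp
  finally show "t = nat ((int i - k) mod int n)" by simp
next
  assume "t = nat ((int i - k) mod int n)"
  hence h: "int t = (int i - k) mod int n" using assms by auto
  have "(int t + k) mod int n = ((int i - k) + k) mod int n" unfolding h by (metis mod_add_left_eq)
  also have "\<dots> = int i" using assms by simp
  finally show "shI n k i t" unfolding shI_def by simp
qed

lemma sum_shI_row: assumes "n > 0" "j < n"
  shows "(\<Sum>i<n. if shI n k i j then f i else 0) = f (nat ((int j + k) mod int n))"
proof -
  have "nat ((int j + k) mod int n) < n" using assms by (simp add: nat_less_iff)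
  thus ?thesis using assms by (simp add: shI_row_iff)
qed

lemma sum_shI_col: assumes "n > 0" "i < n"
  shows "(\<Sum>t<n. if shI n k i t then f t else 0) = f (nat ((int i - k) mod int n))"
proof -
  have lt: "nat ((int i - k) mod int n) < n" using assms by (simp add: nat_less_iff)
  have "(\<Sum>t<n. if shI n k i t then f t else 0) = (\<Sum>t<n. if t = nat ((int i - k) mod int n) then f t else 0)"
    by (rule sum.cong, auto simp: shI_col_iff[OF assms(1,2)])
  thus ?thesis using lt by simp
qed

definition isform :: "nat \<Rightarrow> 'a::comm_ring_1 mat \<Rightarrow> 'a \<Rightarrow> int \<Rightarrow> (nat \<Rightarrow> 'a) \<Rightarrow> bool" where
  "isform n X a k u \<longleftrightarrow> X \<in> carrier_mat n n \<and>
     (\<forall>i<n. \<forall>j<n. X $$ (i,j) = (if shI n k i j then a else 0) + u i) \<and> (\<Sum>i<n. u i) = 1 - a"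

lemma isform_colsum: assumes "isform n X a k u" "n > 0" "j < n"
  shows "(\<Sum>i<n. X $$ (i,j)) = 1"
proof -
  have "(\<Sum>i<n. X $$ (i,j)) = (\<Sum>i<n. (if shI n k i j then a else 0) + u i)"
    using assms unfolding isform_def by (intro sum.cong) auto
  also have "\<dots> = a + (1 - a)" using assms sum_shI_row[OF assms(2,3), of k "\<lambda>_. a"]
    unfolding isform_def by (simp add: sum.distrib)
  finally show ?thesis by simp
qed

lemma isform_mult: assumes X: "isform n X a k u" and Y: "isform n Y b l v" and n: "n > 0"
  shows "isform n (X * Y) (a * b) (k + l) (\<lambda>i. a * v (nat ((int i - k) mod int n)) + u i)"
proof -
  let ?w = "\<lambda>i. a * v (nat ((int i - k) mod int n)) + u i"
  have Xc: "X \<in> carrier_mat n n" and Yc: "Y \<in> carrier_mat n n" using X Y unfolding isform_def by auto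
  have sv: "b + (\<Sum>t<n. v t) = 1" using Y unfolding isform_def by simp
  have ent: "(X * Y) $$ (i,j) = (if shI n (k + l) i j then a * b else 0) + ?w i" if i: "i < n" and j: "j < n" for i j
  proof -
    let ?A = "\<lambda>t. if shI n k i t then a else 0"
    let ?B = "\<lambda>t. if shI n l t j then b else 0"
    have shIeq: "shI n k i (nat ((int j + l) mod int n)) \<longleftrightarrow> shI n (k + l) i j"
    proof -
      have "(int (nat ((int j + l) mod int n)) + k) mod int n = ((int j + l) mod int n + k) mod int n"
        using n by simp
      also have "\<dots> = (int j + (k + l)) mod int n" by (metis mod_add_left_eq add.assoc add.commute)
      finally show ?thesis unfolding shI_def by simp
    qed
    have "(X * Y) $$ (i,j) = (\<Sum>t<n. (?A t + u i) * (?B t + v t))"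
      unfolding mult_entry[OF Xc Yc i j] using X Y i j unfolding isform_def by (intro sum.cong) auto
    also have "\<dots> = (\<Sum>t<n. if shI n l t j then ?A t * b else 0) + (\<Sum>t<n. if shI n k i t then a * v t else 0)
        + u i * (\<Sum>t<n. if shI n l t j then b else 0) + u i * (\<Sum>t<n. v t)"
    proof -
      have "(?A t + u i) * (?B t + v t) = (if shI n l t j then ?A t * b else 0) + (if shI n k i t then a * v t else 0)
        + u i * (if shI n l t j then b else 0) + u i * v t" for t by (simp add: algebra_simps)
      thus ?thesis by (simp add: sum.distrib sum_distrib_left)
    qed
    also have "\<dots> = ?A (nat ((int j + l) mod int n)) * b + a * v (nat ((int i - k) mod int n)) + u i * b + u i * (\<Sum>t<n. v t)"
      using sum_shI_row[OF n j, of l "\<lambda>t. ?A t * b"] sum_shI_row[OF n j, of l "\<lambda>t. b"]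
        sum_shI_col[OF n i, of k "\<lambda>t. a * v t"] by simp
    also have "\<dots> = (if shI n (k + l) i j then a * b else 0) + a * v (nat ((int i - k) mod int n)) + u i * (b + (\<Sum>t<n. v t))"
      using shIeq by (simp add: algebra_simps)
    finally show ?thesis using sv by simp
  qed
  have cs: "(\<Sum>i<n. (X * Y) $$ (i,0)) = 1"
  proof -
    have "(\<Sum>i<n. (X * Y) $$ (i,0)) = (\<Sum>i<n. \<Sum>t<n. X $$ (i,t) * Y $$ (t,0))"
      using mult_entry[OF Xc Yc] n by simp
    also have "\<dots> = (\<Sum>t<n. (\<Sum>i<n. X $$ (i,t)) * Y $$ (t,0))"
      by (subst sum.swap) (simp add: sum_distrib_right)
    also have "\<dots> = (\<Sum>t<n. Y $$ (t,0))" using isform_colsum[OF X n] by simp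
    also have "\<dots> = 1" using isform_colsum[OF Y n n] .
    finally show ?thesis .
  qed
  have "(\<Sum>i<n. (X * Y) $$ (i,0)) = (\<Sum>i<n. (if shI n (k + l) i 0 then a * b else 0) + ?w i)"
    using ent n by simp
  also have "\<dots> = a * b + (\<Sum>i<n. ?w i)"
    using sum_shI_row[OF n n, of "k + l" "\<lambda>_. a * b"] by (simp add: sum.distrib)
  finally have "(\<Sum>i<n. ?w i) = 1 - a * b" using cs by (simp add: algebra_simps)
  thus ?thesis unfolding isform_def using ent Xc Yc by auto
qed


lemma isform_one: assumes "n > 0" shows "isform n (1\<^sub>m n :: 'a::comm_ring_1 mat) 1 0 (\<lambda>_. 0)"
  unfolding isform_def shI_def by auto

lemma isform_pow: assumes X: "isform n X a k u" and n: "n > 0"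
  shows "\<exists>w. isform n (X ^\<^sub>m N) (a ^ N) (int N * k) w"
proof (induction N)
  case 0
  have "X \<in> carrier_mat n n" using X unfolding isform_def by simp
  hence "X ^\<^sub>m 0 = 1\<^sub>m n" by simp
  then show ?case using isform_one[OF n] by auto
next
  case (Suc N)
  then obtain w where w: "isform n (X ^\<^sub>m N) (a ^ N) (int N * k) w" by blast
  have "isform n (X ^\<^sub>m N * X) (a ^ N * a) (int N * k + k) (\<lambda>i. a ^ N * u (nat ((int i - int N * k) mod int n)) + w i)" by (rule isform_mult[OF w X n])
  thus ?case by (auto simp: algebra_simps)
qed

lemma gen_carrier: "burau_gen n q i \<in> carrier_mat n n" unfolding burau_gen_def by simp
lemma gen_inv_carrier: "burau_gen_inv n q i \<in> carrier_mat n n" unfolding burau_gen_inv_def by simp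

lemma gen_mult:
  assumes i: "1 \<le> i" "i < n" and X: "X \<in> carrier_mat n n" and r: "r < n" and c: "c < n"
  shows "(burau_gen n q i * X) $$ (r,c) = (if r = i - 1 then (1 - q) * X $$ (i-1,c) + X $$ (i,c)
     else if r = i then q * X $$ (i-1,c) else X $$ (r,c))"
proof -
  have i1: "i - 1 < n" using i by simp
  have "(burau_gen n q i * X) $$ (r,c) = (\<Sum>t<n. burau_gen n q i $$ (r,t) * X $$ (t,c))"
    by (rule mult_entry[OF gen_carrier X r c])
  also have "\<dots> = (\<Sum>t<n. (if t = i - 1 then (if r = i - 1 then 1 - q else if r = i then q else 0) * X $$ (i-1,c) else 0)
     + (if t = i then (if r = i - 1 then 1 else 0) * X $$ (i,c) else 0)
     + (if t = r \<and> r \<noteq> i - 1 \<and> r \<noteq> i then X $$ (r,c) else 0))"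
    by (rule sum.cong; insert i r i1; auto simp: burau_gen_def; linarith)
  also have "\<dots> = (if r = i - 1 then 1 - q else if r = i then q else 0) * X $$ (i-1,c)
     + (if r = i - 1 then 1 else 0) * X $$ (i,c) + (if r \<noteq> i - 1 \<and> r \<noteq> i then X $$ (r,c) else 0)"
    using i r i1 by (simp add: sum.distrib)
  finally show ?thesis by auto
qed

lemma gen_inv_mult:
  assumes i: "1 \<le> i" "i < n" and X: "X \<in> carrier_mat n n" and r: "r < n" and c: "c < n"
  shows "(burau_gen_inv n q i * X) $$ (r,c) = (if r = i - 1 then inverse q * X $$ (i,c)
     else if r = i then X $$ (i-1,c) + (1 - inverse q) * X $$ (i,c) else X $$ (r,c))"
proof -
  have i1: "i - 1 < n" using i by simp
  have "(burau_gen_inv n q i * X) $$ (r,c) = (\<Sum>t<n. burau_gen_inv n q i $$ (r,t) * X $$ (t,c))"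
    by (rule mult_entry[OF gen_inv_carrier X r c])
  also have "\<dots> = (\<Sum>t<n. (if t = i - 1 then (if r = i then 1 else 0) * X $$ (i-1,c) else 0)
     + (if t = i then (if r = i - 1 then inverse q else if r = i then 1 - inverse q else 0) * X $$ (i,c) else 0)
     + (if t = r \<and> r \<noteq> i - 1 \<and> r \<noteq> i then X $$ (r,c) else 0))"
    by (rule sum.cong; insert i r i1; auto simp: burau_gen_inv_def; linarith)
  also have "\<dots> = (if r = i then 1 else 0) * X $$ (i-1,c)
     + (if r = i - 1 then inverse q else if r = i then 1 - inverse q else 0) * X $$ (i,c) + (if r \<noteq> i - 1 \<and> r \<noteq> i then X $$ (r,c) else 0)"
    using i r i1 by (simp add: sum.distrib)
  finally show ?thesis using i by auto
qed

definition Fm :: "nat \<Rightarrow> 'a::field \<Rightarrow> nat \<Rightarrow> 'a mat" where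
  "Fm n q j = mat n n (\<lambda>(r,c). if c + 1 < j then (if r = c then 1 else 0)
     else if c = n - 1 then (if r = j - 1 then 1 else 0)
     else (if r = j - 1 then 1 - q else 0) + (if r = c + 1 then q else 0))"

lemma Fm_foldr: "1 \<le> j \<Longrightarrow> j \<le> n \<Longrightarrow> foldr (\<lambda>i A. burau_gen n q i * A) [j..<n] (1\<^sub>m n) = Fm n q j"
proof (induction "n - j" arbitrary: j)
  case 0
  hence j: "j = n" by simp
  show ?case unfolding j by (rule eq_matI, auto simp: Fm_def)
next
  case (Suc d)
  hence j: "j < n" "1 \<le> j" and IH: "foldr (\<lambda>i A. burau_gen n q i * A) [Suc j..<n] (1\<^sub>m n) = Fm n q (Suc j)"
    using Suc by auto
  have Fc: "Fm n q (Suc j) \<in> carrier_mat n n" by (simp add: Fm_def)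
  have "foldr (\<lambda>i A. burau_gen n q i * A) [j..<n] (1\<^sub>m n) = burau_gen n q j * Fm n q (Suc j)"
    using j IH by (simp add: upt_conv_Cons)
  also have "\<dots> = Fm n q j"
  proof (rule eq_matI)
    fix r c assume rc: "r < dim_row (Fm n q j)" "c < dim_col (Fm n q j)"
    hence r: "r < n" and c: "c < n" by (auto simp: Fm_def)
    show "(burau_gen n q j * Fm n q (Suc j)) $$ (r,c) = Fm n q j $$ (r,c)"
      unfolding gen_mult[OF j(2) j(1) Fc r c]
      using j r c by (auto simp: Fm_def)
  qed (auto simp: Fm_def burau_gen_def)
  finally show ?case .
qed

definition Hm :: "nat \<Rightarrow> 'a::field \<Rightarrow> nat \<Rightarrow> 'a mat" where
  "Hm n q j = mat n n (\<lambda>(r,c). if c = 0 then (if r = j - 1 then 1 else 0)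
     else if c < j then (if r = c - 1 then inverse q else 0) + (if r = j - 1 then 1 - inverse q else 0)
     else (if r = c then 1 else 0))"

lemma Hm_foldr: "1 \<le> j \<Longrightarrow> j \<le> n \<Longrightarrow> foldr (\<lambda>i A. burau_gen_inv n q i * A) (rev [1..<j]) (1\<^sub>m n) = Hm n q j"
proof (induction j rule: nat_induct_at_least)
  case base
  show ?case by (rule eq_matI, auto simp: Hm_def)
next
  case (Suc j)
  hence j: "j < n" "1 \<le> j" and IH: "foldr (\<lambda>i A. burau_gen_inv n q i * A) (rev [1..<j]) (1\<^sub>m n) = Hm n q j"
    by auto
  have Hc: "Hm n q j \<in> carrier_mat n n" by (simp add: Hm_def)
  have "foldr (\<lambda>i A. burau_gen_inv n q i * A) (rev [1..<Suc j]) (1\<^sub>m n) = burau_gen_inv n q j * Hm n q j"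
    using j IH by simp
  also have "\<dots> = Hm n q (Suc j)"
  proof (rule eq_matI)
    fix r c assume rc: "r < dim_row (Hm n q (Suc j))" "c < dim_col (Hm n q (Suc j))"
    hence r: "r < n" and c: "c < n" by (auto simp: Hm_def)
    show "(burau_gen_inv n q j * Hm n q j) $$ (r,c) = Hm n q (Suc j) $$ (r,c)"
      unfolding gen_inv_mult[OF j(2) j(1) Hc r c]
      using j r c by (auto simp: Hm_def)
  qed (auto simp: Hm_def burau_gen_inv_def)
  finally show ?case .
qed



lemma mod_succ: "c < n \<Longrightarrow> (int c + 1) mod int n = (if c = n - 1 then 0 else int c + 1)"
proof (cases "c = n - 1")
  case True
  assume "c < n"
  hence "int c + 1 = int n" using True by simp
  thus ?thesis using True by simp
next
  case False
  assume "c < n"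
  hence "int c + 1 < int n" using False by simp
  thus ?thesis using False by simp
qed

lemma mod_pred: "c < n \<Longrightarrow> (int c - 1) mod int n = (if c = 0 then int n - 1 else int c - 1)"
proof (cases "c = 0")
  case True
  assume "c < n"
  thus ?thesis using True by (simp add: zmod_minus1)
next
  case False
  assume "c < n"
  thus ?thesis using False by simp
qed

lemma delta_form: assumes "n \<ge> 2"
  shows "isform n (burau_delta n q) q 1 (\<lambda>r. if r = 0 then 1 - q else 0)"
proof -
  have "burau_delta n q = Fm n q 1" unfolding burau_delta_def using assms by (intro Fm_foldr) auto
  moreover have "\<forall>i<n. \<forall>j<n. Fm n q 1 $$ (i,j) = (if shI n 1 i j then q else 0) + (if i = 0 then 1 - q else 0)"
    using assms by (auto simp: Fm_def shI_def mod_succ)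
  moreover have "(\<Sum>i<n. if i = 0 then 1 - q else 0) = 1 - q" using assms by simp
  ultimately show ?thesis unfolding isform_def by (simp add: Fm_def)
qed

lemma delta_inv_form: assumes "n \<ge> 2"
  shows "isform n (burau_delta_inv n q) (inverse q) (-1) (\<lambda>r. if r = n - 1 then 1 - inverse q else 0)"
proof -
  have "burau_delta_inv n q = Hm n q n" unfolding burau_delta_inv_def using assms by (intro Hm_foldr) auto
  moreover have "\<forall>i<n. \<forall>j<n. Hm n q n $$ (i,j) = (if shI n (-1) i j then inverse q else 0) + (if i = n - 1 then 1 - inverse q else 0)"
    using assms by (auto simp: Hm_def shI_def mod_pred)
  moreover have "(\<Sum>i<n. if i = n - 1 then 1 - inverse q else 0) = 1 - inverse q" using assms by simp
  ultimately show ?thesis unfolding isform_def by (simp add: Hm_def)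
qed

lemma sigma_form: assumes "n \<ge> 2"
  shows "\<exists>w. isform n (burau_sigma n m q) (q powi m) m w"
proof (cases "0 \<le> m")
  case True
  obtain w where "isform n (burau_delta n q ^\<^sub>m nat m) (q ^ nat m) (int (nat m) * 1) w"
    using isform_pow[OF delta_form[OF assms], of q] assms by fastforce
  thus ?thesis using True unfolding burau_sigma_def power_int_def by auto
next
  case False
  obtain w where "isform n (burau_delta_inv n q ^\<^sub>m nat (-m)) (inverse q ^ nat (-m)) (int (nat (-m)) * (-1)) w"
    using isform_pow[OF delta_inv_form[OF assms], of q] assms by fastforce
  thus ?thesis using False unfolding burau_sigma_def power_int_def by auto
qed

definition Mk :: "nat \<Rightarrow> 'a::comm_ring_1 \<Rightarrow> int \<Rightarrow> 'a mat" where
  "Mk n t k = mat n n (\<lambda>(i,j). (if i = j then 1 else 0) - (if shI n k i j then t else 0))"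

lemma sum_pCons0: "(\<Sum>i\<in>A. [:0, f i:]) = [:0, (\<Sum>i\<in>A. f i):]"
  by (induction A rule: infinite_finite_induct) auto

lemma zeta_det:
  fixes B :: "'a::field mat"
  assumes B: "isform n B a k u" and n: "n > 0"
  shows "[:1, -(c * a):] * det (1\<^sub>m n - map_mat (\<lambda>x. [:0, c * x:]) B) = [:1, -c:] * det (Mk n [:0, c * a:] k)"
proof -
  let ?M = "Mk n [:0, c * a:] k"
  let ?v = "\<lambda>i. [:0, c * u i:]"
  have Bc: "B \<in> carrier_mat n n" and Be: "\<And>i j. i < n \<Longrightarrow> j < n \<Longrightarrow> B $$ (i,j) = (if shI n k i j then a else 0) + u i"
    and su: "(\<Sum>i<n. u i) = 1 - a" using B unfolding isform_def by auto
  have Mc: "?M \<in> carrier_mat n n" unfolding Mk_def by simp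
  have cs: "(\<Sum>i<n. ?M $$ (i,j)) = [:1, -(c * a):]" if j: "j < n" for j
  proof -
    have "(\<Sum>i<n. ?M $$ (i,j)) = (\<Sum>i<n. (if i = j then 1 else 0) - (if shI n k i j then [:0, c * a:] else 0))"
      using j by (intro sum.cong) (auto simp: Mk_def)
    also have "\<dots> = 1 - [:0, c * a:]" using j n sum_shI_row[OF n j, of k "\<lambda>_. [:0, c * a:]"]
      by (simp add: sum_subtractf)
    also have "\<dots> = [:1, -(c * a):]" by (simp add: one_pCons)
    finally show ?thesis .
  qed
  have eq: "1\<^sub>m n - map_mat (\<lambda>x. [:0, c * x:]) B = mat n n (\<lambda>(i,j). ?M $$ (i,j) - ?v i)"
  proof (rule eq_matI)
    fix i j assume "i < dim_row (mat n n (\<lambda>(i,j). ?M $$ (i,j) - ?v i))" "j < dim_col (mat n n (\<lambda>(i,j). ?M $$ (i,j) - ?v i))"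
    hence i: "i < n" and j: "j < n" by auto
    have "[:0, c * ((if shI n k i j then a else 0) + u i):] = (if shI n k i j then [:0, c * a:] else 0) + [:0, c * u i:]"
      by (auto simp: algebra_simps)
    thus "(1\<^sub>m n - map_mat (\<lambda>x. [:0, c * x:]) B) $$ (i,j) = mat n n (\<lambda>(i,j). ?M $$ (i,j) - ?v i) $$ (i,j)"
      using i j Bc Be[OF i j] by (simp add: Mk_def)
  qed (use Bc in auto)
  have "[:1, -(c * a):] * det (mat n n (\<lambda>(i,j). ?M $$ (i,j) - ?v i)) = ([:1, -(c * a):] - (\<Sum>i<n. ?v i)) * det ?M"
    by (rule det_rank_one[OF Mc n cs])
  also have "[:1, -(c * a):] - (\<Sum>i<n. ?v i) = [:1, -c:]"
    unfolding sum_pCons0 sum_distrib_left[symmetric] su by (simp add: algebra_simps)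
  finally show ?thesis unfolding eq .
qed


lemma Mk_conj:
  assumes n: "n > 0" and cop: "gcd (int n) k = 1"
  shows "det (Mk n t k) = det (Mk n t 1)"
proof -
  define \<sigma> where "\<sigma> i = (if i < n then nat ((k * int i) mod int n) else i)" for i
  have cp: "coprime k (int n)" using cop by (simp add: coprime_iff_gcd_eq_1 gcd.commute)
  have sint: "int (\<sigma> i) = (k * int i) mod int n" if "i < n" for i
    using that n unfolding \<sigma>_def by simp
  have slt: "\<sigma> i < n" if "i < n" for i
    using that n unfolding \<sigma>_def by (simp add: nat_less_iff)
  have canc: "(k * x) mod int n = (k * y) mod int n \<longleftrightarrow> x mod int n = y mod int n" for x y
    using cong_mult_lcancel[OF cp, of x y] unfolding cong_def .
  have inj: "inj_on \<sigma> {0..<n}"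
  proof (rule inj_onI)
    fix i j assume "i \<in> {0..<n}" "j \<in> {0..<n}" "\<sigma> i = \<sigma> j"
    hence i: "i < n" and j: "j < n" and e: "int (\<sigma> i) = int (\<sigma> j)" by auto
    hence "(k * int i) mod int n = (k * int j) mod int n" using sint by simp
    hence "int i mod int n = int j mod int n" using canc by simp
    thus "i = j" using i j by simp
  qed
  have img: "\<sigma> ` {0..<n} = {0..<n}" by (rule endo_inj_surj[OF _ _ inj]) (auto simp: slt)
  have perm: "\<sigma> permutes {0..<n}"
    by (rule bij_imp_permutes) (use inj img in \<open>auto simp: bij_betw_def \<sigma>_def\<close>)
  have sh: "shI n k (\<sigma> i) (\<sigma> j) \<longleftrightarrow> shI n 1 i j" if i: "i < n" and j: "j < n" for i j
  proof -
    have "shI n k (\<sigma> i) (\<sigma> j) \<longleftrightarrow> (k * int i) mod int n = ((k * int j) mod int n + k) mod int n"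
      unfolding shI_def using sint i j by simp
    also have "((k * int j) mod int n + k) mod int n = (k * (int j + 1)) mod int n"
      by (metis mod_add_left_eq distrib_left mult.right_neutral)
    also have "(k * int i) mod int n = (k * (int j + 1)) mod int n \<longleftrightarrow> int i mod int n = (int j + 1) mod int n"
      using canc .
    also have "\<dots> \<longleftrightarrow> shI n 1 i j" unfolding shI_def using i by simp
    finally show ?thesis .
  qed
  have "mat n n (\<lambda>(i,j). Mk n t k $$ (\<sigma> i, \<sigma> j)) = Mk n t 1"
  proof (rule eq_matI)
    fix i j assume "i < dim_row (Mk n t 1)" "j < dim_col (Mk n t 1)"
    hence i: "i < n" and j: "j < n" by (auto simp: Mk_def)
    have "\<sigma> i = \<sigma> j \<longleftrightarrow> i = j" using inj i j by (auto dest: inj_onD)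
    thus "mat n n (\<lambda>(i,j). Mk n t k $$ (\<sigma> i, \<sigma> j)) $$ (i,j) = Mk n t 1 $$ (i,j)"
      using i j slt[OF i] slt[OF j] sh[OF i j] by (simp add: Mk_def)
  qed (auto simp: Mk_def)
  moreover have "det (mat n n (\<lambda>(i,j). Mk n t k $$ (\<sigma> i, \<sigma> j))) = det (Mk n t k)"
    by (rule det_perm_both[OF _ perm]) (simp add: Mk_def)
  ultimately show ?thesis by simp
qed

lemma field_final:
  fixes G a b D1 D2 \<Delta> :: "'a::field"
  assumes "G \<noteq> 0" "a \<noteq> 0" "b \<noteq> 0" "G * D1 = a * \<Delta>" "G * D2 = b * \<Delta>"
  shows "a * inverse D1 = b * inverse D2"
proof (cases "\<Delta> = 0")
  case True
  thus ?thesis using assms by simp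
next
  case False
  have d1: "D1 \<noteq> 0" using assms False by (metis mult_eq_0_iff)
  have d2: "D2 \<noteq> 0" using assms False by (metis mult_eq_0_iff)
  have "a * inverse D1 = G * inverse \<Delta>" using d1 False assms(4)
    by (simp add: field_simps; metis mult.commute)
  moreover have "b * inverse D2 = G * inverse \<Delta>" using d2 False assms(5)
    by (simp add: field_simps; metis mult.commute)
  ultimately show ?thesis by simp
qed

theorem corollary3p2:
  fixes n :: nat and m m' :: int
  assumes "n \<ge> 2"
    and "gcd (int n) m = 1"
    and "gcd (int n) (m + m') = 1"
  shows "to_fract [:1, -1:] * burau_zeta n (m + m') burau_q 1
       = to_fract [:1, - (burau_q powi m'):] * burau_zeta n m burau_q (burau_q powi m')"
proof -
  let ?q = burau_q
  let ?c = "?q powi m'"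
  let ?T = "?q powi (m + m')"
  have n: "n > 0" using assms by simp
  have q0: "?q \<noteq> 0" unfolding burau_q_def by simp
  have cT: "?c * ?q powi m = ?T" using q0 by (simp add: power_int_add mult.commute)
  obtain w1 where w1: "isform n (burau_sigma n (m + m') ?q) (?q powi (m + m')) (m + m') w1"
    using sigma_form[OF assms(1)] by blast
  obtain w2 where w2: "isform n (burau_sigma n m ?q) (?q powi m) m w2"
    using sigma_form[OF assms(1)] by blast
  define D1 where "D1 = det (1\<^sub>m n - map_mat (\<lambda>x. [:0, 1 * x:]) (burau_sigma n (m + m') ?q))"
  define D2 where "D2 = det (1\<^sub>m n - map_mat (\<lambda>x. [:0, ?c * x:]) (burau_sigma n m ?q))"
  define \<Delta> where "\<Delta> = det (Mk n [:0, ?T:] 1)"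
  have e1: "[:1, -?T:] * D1 = [:1, -1:] * \<Delta>"
    using zeta_det[OF w1 n, of 1, unfolded mult_1_left Mk_conj[OF n assms(3)], folded D1_def \<Delta>_def[unfolded mult_1_left]] 
    unfolding D1_def \<Delta>_def by simp
  have e2: "[:1, -?T:] * D2 = [:1, -?c:] * \<Delta>"
    using zeta_det[OF w2 n, of ?c, unfolded cT Mk_conj[OF n assms(2)]] unfolding D2_def \<Delta>_def .
  have f1: "to_fract [:1, -?T:] * to_fract D1 = to_fract [:1, -1:] * to_fract \<Delta>"
    unfolding to_fract_mult[symmetric] using e1 by (simp only: to_fract_eq_iff)
  have f2: "to_fract [:1, -?T:] * to_fract D2 = to_fract [:1, -?c:] * to_fract \<Delta>"
    unfolding to_fract_mult[symmetric] using e2 by (simp only: to_fract_eq_iff)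
  have "to_fract [:1, -1:] * inverse (to_fract D1) = to_fract [:1, -?c:] * inverse (to_fract D2)"
    by (rule field_final[OF _ _ _ f1 f2]) simp_all
  thus ?thesis unfolding burau_zeta_def D1_def D2_def by simp
qed

end
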